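(* Let $\Sigma$ be an alphabet, $L\subseteq\Sigma^*$ with $|L|\ge 2$, and $R:=\mathrm{lcs}(L)$. Fix any $xR\in L\setminus\{R\}$. Then there is some $yR\in L\setminus\{R\}$ such that $\mathrm{lcsext}(L)=\mathrm{lcs}(x^{\overleftarrow{\omega}},y^{\overleftarrow{\omega}})=\mathrm{lcs}(x^{\overleftarrow{\omega}},y^{\overleftarrow{\omega}},z^{\overleftarrow{\omega}})$ for all $zR\in L$. Moreover, if $xy=yx$, then $R\in L$.
   Context: Add a greatest element $\top$ to the words. For $w\in\Sigma^+$, $u\in\Sigma^*$, $w^{\overleftarrow{\omega}}u$ denotes the left-infinite (ultimately left-periodic) word $\cdots wwwu$; set $\varepsilon^{\overleftarrow{\omega}}:=\top$ and $\top w=w\top=\top$. The suffix order $u\preceq v$ means $u$ is a suffix of $v$, on finite words, ultimately left-periodic words and $\top$, with $\top$ the greatest element. $\mathrm{lcs}(L)$ (longest common suffix) is the infimum of $L$ w.r.t. this order ($\mathrm{lcs}(\emptyset)=\top$). For $L\subseteq\Sigma^*$ with $R=\mathrm{lcs}(L)$, the maximal suffix extension is $\mathrm{lcsext}(L):=\mathrm{lcs}(\{z^{\overleftarrow{\omega}}\mid zR\in L\})$. *)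

theory Defs
  imports Main "HOL-Library.Sublist"
begin

text \<open>Extended words: finite words, left-infinite words (read right to left:
  Inf f denotes ... f 2 f 1 f 0), and a greatest element Top.\<close>
datatype 'a xword = Fin "'a list" | Inf "nat \<Rightarrow> 'a" | Top

fun sfx :: "'a xword \<Rightarrow> 'a xword \<Rightarrow> bool" where
  "sfx _ Top = True"
| "sfx Top _ = False"
| "sfx (Fin u) (Fin v) = suffix u v"
| "sfx (Fin u) (Inf f) = (\<forall>i<length u. rev u ! i = f i)"
| "sfx (Inf f) (Inf g) = (f = g)"
| "sfx (Inf f) (Fin v) = False"

definition lomega :: "'a list \<Rightarrow> 'a xword" where
  "lomega z = (if z = [] then Top else Inf (\<lambda>i. rev z ! (i mod length z)))"

definition is_lcs :: "'a xword set \<Rightarrow> 'a xword \<Rightarrow> bool" where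
  "is_lcs S m \<longleftrightarrow> (\<forall>v\<in>S. sfx m v) \<and> (\<forall>m'. (\<forall>v\<in>S. sfx m' v) \<longrightarrow> sfx m' m)"

definition lcs :: "'a xword set \<Rightarrow> 'a xword" where
  "lcs S = (THE m. is_lcs S m)"

definition lcsext :: "'a list set \<Rightarrow> 'a xword" where
  "lcsext L = lcs {lomega z | z. \<exists>R. lcs (Fin ` L) = Fin R \<and> z @ R \<in> L}"

end

theory Submission
  imports Defs
begin

lemma sfx_refl: "sfx a a"
  by (cases a) auto

lemma sfx_antisym: "sfx a b \<Longrightarrow> sfx b a \<Longrightarrow> a = b"
  by (cases a; cases b) (auto intro: suffix_order.antisym)

lemma sfx_trans: "sfx a b \<Longrightarrow> sfx b c \<Longrightarrow> sfx a c"
proof (cases a; cases b; cases c)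
  fix u v h assume "a = Fin u" "b = Fin v" "c = Inf h" "sfx a b" "sfx b c"
  then obtain w where "v = w @ u" "\<forall>i<length v. rev v ! i = h i" by (auto simp: suffix_def)
  then have "\<forall>i<length u. rev u ! i = h i"
    by (metis (no_types, lifting) length_append length_rev nth_append rev_append trans_less_add2)
  then show "sfx a c" using \<open>a = Fin u\<close> \<open>c = Inf h\<close> by auto
qed (auto intro: suffix_order.trans)

lemma lcs_eq: "is_lcs S m \<Longrightarrow> lcs S = m"
  unfolding lcs_def
  by (rule the_equality) (auto simp: is_lcs_def intro: sfx_antisym)

lemma fin_lb:
  assumes "sfx (Fin v) (Inf f)" "sfx (Fin v) (Inf g)" "f k \<noteq> g k"
  shows "sfx (Fin v) (Fin (rev (map f [0..<k])))"
proof -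
  have le: "length v \<le> k"
  proof (rule ccontr)
    assume "\<not> length v \<le> k"
    then have "k < length v" by simp
    then have "rev v ! k = f k" "rev v ! k = g k" using assms(1,2) by auto
    then show False using assms(3) by simp
  qed
  have "rev v = take (length v) (map f [0..<k])"
    using assms(1) le by (intro nth_equalityI) auto
  then have "prefix (rev v) (map f [0..<k])" by (metis take_is_prefix)
  then show ?thesis by (simp add: suffix_to_prefix)
qed

lemma is_lcs_A:
  assumes "Inf f \<in> S" "Inf g \<in> S" "f k \<noteq> g k"
    "\<forall>v\<in>S. sfx (Fin (rev (map f [0..<k]))) v"
  shows "is_lcs S (Fin (rev (map f [0..<k])))"
  unfolding is_lcs_def
proof (intro conjI allI impI)
  fix m' assume h: "\<forall>v\<in>S. sfx m' v"
  then have a: "sfx m' (Inf f)" "sfx m' (Inf g)" using assms by auto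
  show "sfx m' (Fin (rev (map f [0..<k])))"
  proof (cases m')
    case (Fin v) then show ?thesis using fin_lb a assms(3) by blast
  next
    case (Inf h) then show ?thesis using a assms(3) by auto
  next
    case Top then show ?thesis using a by auto
  qed
qed (use assms in auto)

lemma is_lcs_B:
  assumes "Inf f \<in> S" "S \<subseteq> {Inf f, Top}"
  shows "is_lcs S (Inf f)"
  using assms unfolding is_lcs_def by (auto simp: sfx_refl)

lemma lcs_exists:
  assumes "w0 \<in> L"
  shows "is_lcs (Fin ` L) (lcs (Fin ` L))"
proof -
  define C where "C = {v. \<forall>w\<in>L. suffix v w}"
  have "C \<subseteq> set (suffixes w0)" using assms by (auto simp: C_def)
  then have fin: "finite C" by (rule finite_subset) simp
  have "[] \<in> C" by (simp add: C_def)
  define n where "n = Max (length ` C)"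
  have "n \<in> length ` C" unfolding n_def using fin \<open>[] \<in> C\<close> by (intro Max_in) auto
  then obtain v0 where v0: "v0 \<in> C" "length v0 = n" by auto
  have mx: "\<forall>v\<in>C. length v \<le> length v0" using fin v0 unfolding n_def by auto
  have "is_lcs (Fin ` L) (Fin v0)"
    unfolding is_lcs_def
  proof (intro conjI allI impI)
    show "\<forall>v\<in>Fin ` L. sfx (Fin v0) v" using v0 by (auto simp: C_def)
    fix m' assume h: "\<forall>v\<in>Fin ` L. sfx m' v"
    then have a: "sfx m' (Fin w0)" using assms by auto
    show "sfx m' (Fin v0)"
    proof (cases m')
      case (Fin v)
      then have "v \<in> C" using h by (auto simp: C_def)
      then have "suffix v w0" "suffix v0 w0" "length v \<le> length v0" using mx v0 assms by (auto simp: C_def)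
      then have "suffix v v0"
      proof -
        have "suffix v v0 \<or> suffix v0 v" using suffix_same_cases \<open>suffix v w0\<close> \<open>suffix v0 w0\<close> by blast
        moreover have "suffix v0 v \<Longrightarrow> v0 = v"
        proof -
          assume "suffix v0 v"
          then obtain w where "v = w @ v0" by (auto simp: suffix_def)
          then show "v0 = v" using \<open>length v \<le> length v0\<close> by simp
        qed
        ultimately show ?thesis by auto
      qed
      then show ?thesis using Fin by simp
    next
      case (Inf h) then show ?thesis using a by auto
    next
      case Top then show ?thesis using a by auto
    qed
  qed
  then show ?thesis using lcs_eq by metis
qed

definition rf :: "'a list \<Rightarrow> nat \<Rightarrow> 'a" where
  "rf x = (\<lambda>i. rev x ! (i mod length x))"

lemma lomega_rf: "x \<noteq> [] \<Longrightarrow> lomega x = Inf (rf x)"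
  by (simp add: lomega_def rf_def)

lemma nth_concat_replicate:
  "j < m * length w \<Longrightarrow> concat (replicate m w) ! j = w ! (j mod length w)"
proof (induction m arbitrary: j)
  case 0 then show ?case by simp
next
  case (Suc m)
  show ?case
  proof (cases "j < length w")
    case True then show ?thesis by (simp add: nth_append)
  next
    case False
    then have "j - length w < m * length w" using Suc.prems by auto
    then show ?thesis using False Suc.IH by (simp add: nth_append mod_if)
  qed
qed

lemma rf_rep:
  assumes "zs \<noteq> []" "m > 0"
  shows "rf (concat (replicate m zs)) = rf zs"
proof
  fix i
  have r: "rev (concat (replicate m zs)) = concat (replicate m (rev zs))"
    by (simp add: rev_concat)
  have l: "length (concat (replicate m zs)) = m * length zs" by (simp add: length_concat sum_list_replicate)
  have "i mod (m * length zs) < m * length zs" using assms by simp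
  then show "rf (concat (replicate m zs)) i = rf zs i"
    unfolding rf_def r l
    by (simp add: nth_concat_replicate mod_mod_cancel)
qed

lemma comm_rf:
  assumes "x @ y = y @ x" "x \<noteq> []" "y \<noteq> []"
  shows "rf x = rf y"
proof -
  obtain m n zs where "concat (replicate m zs) = x" "concat (replicate n zs) = y"
    using comm_append_are_replicate[OF assms(1)] by blast
  moreover then have "zs \<noteq> []" "m > 0" "n > 0" using assms by auto
  ultimately show ?thesis using rf_rep by metis
qed

theorem lemma4:
  fixes L :: "'a list set" and R x :: "'a list"
  assumes two: "\<exists>u\<in>L. \<exists>v\<in>L. u \<noteq> v"
    and R: "lcs (Fin ` L) = Fin R"
    and x: "x @ R \<in> L" "x @ R \<noteq> R"
  shows "\<exists>y. y @ R \<in> L \<and> y @ R \<noteq> R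
           \<and> lcsext L = lcs {lomega x, lomega y}
           \<and> (\<forall>z. z @ R \<in> L \<longrightarrow> lcs {lomega x, lomega y} = lcs {lomega x, lomega y, lomega z})
           \<and> (x @ y = y @ x \<longrightarrow> R \<in> L)"
proof -
  define V where "V = {z. z @ R \<in> L \<and> z \<noteq> []}"
  define f where "f = rf x"
  have xV: "x \<in> V" using x by (auto simp: V_def)
  have xne: "x \<noteq> []" using x by auto
  have ox: "lomega x = Inf f" using xne by (simp add: f_def lomega_rf)
  have Eset: "{lomega z | z. \<exists>R'. lcs (Fin ` L) = Fin R' \<and> z @ R' \<in> L} = {lomega z | z. z @ R \<in> L}"
    using R by auto
  have lext: "lcsext L = lcs {lomega z | z. z @ R \<in> L}"
    unfolding lcsext_def Eset ..
  show ?thesis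
  proof (cases "\<exists>z\<in>V. \<exists>i. rf z i \<noteq> f i")
    case True
    define D where "D = {i. \<exists>z\<in>V. rf z i \<noteq> f i}"
    define k where "k = Least (\<lambda>i. i \<in> D)"
    have "D \<noteq> {}" using True by (auto simp: D_def)
    then have "k \<in> D" unfolding k_def by (metis LeastI ex_in_conv)
    then obtain y where yV: "y \<in> V" and yk: "rf y k \<noteq> f k" by (auto simp: D_def)
    have below: "\<And>z i. z \<in> V \<Longrightarrow> i < k \<Longrightarrow> rf z i = f i"
      unfolding k_def using not_less_Least D_def by blast
    define m where "m = Fin (rev (map f [0..<k]))"
    have mz: "sfx m (lomega z)" if "z @ R \<in> L" for z
    proof (cases "z = []")
      case True then show ?thesis by (simp add: lomega_def)
    next
      case False
      then have "z \<in> V" using that by (simp add: V_def)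
      then show ?thesis using below False by (simp add: m_def lomega_rf)
    qed
    have yne: "y \<noteq> []" using yV by (simp add: V_def)
    have oy: "lomega y = Inf (rf y)" using yne by (simp add: lomega_rf)
    have yL: "y @ R \<in> L" using yV by (simp add: V_def)
    have fk: "f k \<noteq> rf y k" using yk by simp
    have c1: "lcs {lomega x, lomega y} = m"
      unfolding m_def
      by (rule lcs_eq, rule is_lcs_A[where f=f and g="rf y" and k=k]) (use fk ox oy mz[OF x(1)] mz[OF yL] m_def in auto)
    have c2: "lcs {lomega x, lomega y, lomega z} = m" if "z @ R \<in> L" for z
      unfolding m_def
      by (rule lcs_eq, rule is_lcs_A[where f=f and g="rf y" and k=k]) (use fk ox oy mz[OF x(1)] mz[OF yL] mz[OF that] m_def in auto)
    have c3: "lcsext L = m"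
      unfolding lext m_def
    proof (rule lcs_eq, rule is_lcs_A[where f=f and g="rf y" and k=k])
      show "Inf f \<in> {lomega z |z. z @ R \<in> L}" using ox x(1) by force
      show "Inf (rf y) \<in> {lomega z |z. z @ R \<in> L}" using oy yL by force
      show "f k \<noteq> rf y k" by (rule fk)
      show "\<forall>v\<in>{lomega z |z. z @ R \<in> L}. sfx (Fin (rev (map f [0..<k]))) v"
        using mz m_def by auto
    qed
    have c4: "x @ y = y @ x \<longrightarrow> R \<in> L"
      using comm_rf[OF _ xne yne] fk f_def by metis
    show ?thesis
      using yL yne c1 c2 c3 c4 by (intro exI[of _ y]) auto
  next
    case False
    then have allf: "\<And>z. z \<in> V \<Longrightarrow> rf z = f" by blast
    have oz: "lomega z \<in> {Inf f, Top}" if "z @ R \<in> L" for z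
      using that allf[of z] by (cases "z = []") (auto simp: V_def lomega_def rf_def)
    have c1: "lcs {lomega x, lomega x} = Inf f"
      by (rule lcs_eq, rule is_lcs_B) (use ox in auto)
    have c2: "lcs {lomega x, lomega x, lomega z} = Inf f" if "z @ R \<in> L" for z
      by (rule lcs_eq, rule is_lcs_B) (use ox oz[OF that] in auto)
    have c3: "lcsext L = Inf f"
      unfolding lext
      by (rule lcs_eq, rule is_lcs_B) (use ox oz x(1) in force)+
    have RL: "R \<in> L"
    proof (rule ccontr)
      assume nR: "R \<notin> L"
      have isl: "is_lcs (Fin ` L) (Fin R)" using lcs_exists[OF x(1)] R by simp
      have "suffix (f 0 # R) w" if "w \<in> L" for w
      proof -
        have "suffix R w" using isl that by (auto simp: is_lcs_def)
        then obtain z where w: "w = z @ R" by (auto simp: suffix_def)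
        then have "z \<noteq> []" using nR that by auto
        then have "z \<in> V" using w that by (simp add: V_def)
        then have "rf z 0 = f 0" using allf by simp
        then have "rev z ! 0 = f 0" by (simp add: rf_def)
        then obtain z' where "z = z' @ [f 0]" using \<open>z \<noteq> []\<close>
          by (metis append_butlast_last_id hd_rev hd_conv_nth rev_is_Nil_conv)
        then show ?thesis using w by (auto simp: suffix_def)
      qed
      then have "\<forall>v\<in>Fin ` L. sfx (Fin (f 0 # R)) v" by auto
      then have "sfx (Fin (f 0 # R)) (Fin R)" using isl unfolding is_lcs_def by blast
      then show False using suffix_length_le by fastforce
    qed
    show ?thesis
      using x c1 c2 c3 RL by (intro exI[of _ x]) (auto)
  qed
qed

end
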